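(* Consider the remote-attestation Stackelberg game described in the context with device classes $\mathcal{E}_1,\dots,\mathcal{E}_n$ partitioning $\mathcal{D}$ and a single attestation method $m$. For each class $\mathcal{E}_i$, let $\vec p^*_i$ be an optimal attestation strategy for the game restricted to the devices of $\mathcal{E}_i$, given as follows: for $\delta\in\mathcal{E}_i$ let $\overline{\tau}_\delta=\frac{1}{\mu^m}\cdot\frac{C_A^\delta-G_A^\delta}{L_A^\delta-G_A^\delta}$ and $\tau_\delta=\frac{1}{\mu^m}\cdot\frac{C_A^{\mathcal{E}_i}+C_A^\delta-G_A^\delta}{L_A^\delta-G_A^\delta}$; let $(p^{\mathrm{ND}})_\delta^m=0$ if $C_D^m\ge(G_D^\delta-L_D^\delta)\mu^m$ and $\overline{\tau}_\delta\ge L_D^\delta/(-C_D^m)$, and $(p^{\mathrm{ND}})_\delta^m=\overline{\tau}_\delta$ otherwise; let $a^*_\delta=1$ if $(p^{\mathrm{ND}})_\delta^m<\overline{\tau}_\delta$ and $0$ otherwise; let $\vec p^{\mathrm{D}}=\operatorname{argmin}_{\{\vec p:\ U_A^{(i)}(\vec p,\vec 1)\le0\ \wedge\ \forall\delta\in\mathcal{E}_i\,(p_\delta^m\in[0,\tau_\delta])\}}\sum_{\delta\in\mathcal{E}_i}C_D^m p_\delta^m$; and the optimal strategy set for the restricted game is $\{\vec p^{\mathrm{ND}}\}$ if $U_D^{(i)}(\vec p^{\mathrm{ND}},\vec a^* )>U_D^{(i)}(\vec p^{\mathrm{D}},\vec 0)$, $\{\vec p^{\mathrm{ND}},\vec p^{\mathrm{D}}\}$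 if these are equal, and $\{\vec p^{\mathrm{D}}\}$ otherwise, where $U_A^{(i)},U_D^{(i)}$ denote the utilities of the game restricted to $\mathcal{E}_i$. Then $\langle\vec p^*_1,\vec p^*_2,\dots,\vec p^*_n\rangle$ is an optimal attestation strategy for the full game.
   Context: Remote-attestation game: there is a finite set $\mathcal{D}$ of devices partitioned into pairwise disjoint device classes $\mathcal{E}_1,\dots,\mathcal{E}_n$, and a finite set $\mathcal{M}$ of attestation methods. Constants: for each method $m$, a detection probability $\mu^m$ and a defender cost $C_D^m$; for each device $\delta$, an attacker cost $C_A^\delta$; for each class $\mathcal{E}$, an attacker exploit-development cost $C_A^{\mathcal{E}}$; for each device $\delta$, defender gain $G_D^\delta$ and loss $L_D^\delta$, attacker gain $G_A^\delta$ and loss $L_A^\delta$ (losses are negative values), with $G_D^\delta=-L_A^\delta$ and $L_D^\delta=-G_A^\delta$. The defender chooses $\vec p=\langle p_\delta^m\rangle\in[0,1]^{|\mathcal{D}\times\mathcal{M}|}$; the attacker chooses $\vec a\in\{0,1\}^{|\mathcal{D}|}$. $P_\delta(\vec p)=1-\prod_m(1-\mu^m p_\delta^m)$; $C_D^T(\vec p)=\sum_\delta\sum_m C_D^m p_\delta^m$; $U_D(\vec p,\vec a)=\sum_\delta[G_D^\delta P_\delta(\vec p)+L_D^\delta(1-P_\delta(\vec p))]a_\delta-C_D^T(\vec p)$; $C_A^T(\vec a)=\sum_{\mathcal{E}}\big(C_A^{\mathcal{E}}1_{\{\exists\delta\in\mathcal{E}:a_\delta=1\}}+\sum_{\delta\in\mathcal{E}}C_A^\delta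 a_\delta\big)$; $U_A(\vec p,\vec a)=\sum_\delta[L_A^\delta P_\delta(\vec p)+G_A^\delta(1-P_\delta(\vec p))]a_\delta-C_A^T(\vec a)$. Attacker best response: $\mathcal{F}_A(\vec p)=\operatorname{argmax}_{\vec a}U_A(\vec p,\vec a)$. Defender's optimal strategy: $\vec p^*=\operatorname{argmax}_{\vec p,\ \vec a\in\mathcal{F}_A(\vec p)}U_D(\vec p,\vec a)$ (ties in the attacker's best response broken in favor of the defender). The game restricted to a class $\mathcal{E}_i$ is the same game with device set $\mathcal{E}_i$ (and that single class); $\vec 0,\vec 1$ are the all-zeros and all-ones attack vectors. *)

theory Defs
  imports Complex_Main
begin

record ('d,'m) ra_params =
  mu    :: "'m \<Rightarrow> real"
  CD    :: "'m \<Rightarrow> real"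
  CAdev :: "'d \<Rightarrow> real"
  GD    :: "'d \<Rightarrow> real"
  LD    :: "'d \<Rightarrow> real"
  GA    :: "'d \<Rightarrow> real"
  LA    :: "'d \<Rightarrow> real"

definition devices :: "nat set \<Rightarrow> (nat \<Rightarrow> 'd set) \<Rightarrow> 'd set" where
  "devices I E = (\<Union>i\<in>I. E i)"

definition Pdet :: "('d,'m) ra_params \<Rightarrow> 'm set \<Rightarrow> ('d \<Rightarrow> 'm \<Rightarrow> real) \<Rightarrow> 'd \<Rightarrow> real" where
  "Pdet g M p \<delta> = 1 - (\<Prod>m\<in>M. 1 - mu g m * p \<delta> m)"

definition ind :: "bool \<Rightarrow> real" where
  "ind b = (if b then 1 else 0)"

definition CDT :: "('d,'m) ra_params \<Rightarrow> 'd set \<Rightarrow> 'm set \<Rightarrow> ('d \<Rightarrow> 'm \<Rightarrow> real) \<Rightarrow> real" where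
  "CDT g D M p = (\<Sum>\<delta>\<in>D. \<Sum>m\<in>M. CD g m * p \<delta> m)"

definition UD :: "('d,'m) ra_params \<Rightarrow> nat set \<Rightarrow> (nat \<Rightarrow> 'd set) \<Rightarrow> 'm set
    \<Rightarrow> ('d \<Rightarrow> 'm \<Rightarrow> real) \<Rightarrow> ('d \<Rightarrow> bool) \<Rightarrow> real" where
  "UD g I E M p a =
     (\<Sum>\<delta>\<in>devices I E. (GD g \<delta> * Pdet g M p \<delta> + LD g \<delta> * (1 - Pdet g M p \<delta>)) * ind (a \<delta>))
     - CDT g (devices I E) M p"

definition CAT :: "('d,'m) ra_params \<Rightarrow> nat set \<Rightarrow> (nat \<Rightarrow> 'd set) \<Rightarrow> (nat \<Rightarrow> real)
    \<Rightarrow> ('d \<Rightarrow> bool) \<Rightarrow> real" where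
  "CAT g I E CAE a =
     (\<Sum>i\<in>I. CAE i * ind (\<exists>\<delta>\<in>E i. a \<delta>) + (\<Sum>\<delta>\<in>E i. CAdev g \<delta> * ind (a \<delta>)))"

definition UA :: "('d,'m) ra_params \<Rightarrow> nat set \<Rightarrow> (nat \<Rightarrow> 'd set) \<Rightarrow> (nat \<Rightarrow> real) \<Rightarrow> 'm set
    \<Rightarrow> ('d \<Rightarrow> 'm \<Rightarrow> real) \<Rightarrow> ('d \<Rightarrow> bool) \<Rightarrow> real" where
  "UA g I E CAE M p a =
     (\<Sum>\<delta>\<in>devices I E. (LA g \<delta> * Pdet g M p \<delta> + GA g \<delta> * (1 - Pdet g M p \<delta>)) * ind (a \<delta>))
     - CAT g I E CAE a"

definition def_strats :: "'d set \<Rightarrow> 'm set \<Rightarrow> ('d \<Rightarrow> 'm \<Rightarrow> real) set" where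
  "def_strats D M = {p. (\<forall>\<delta>\<in>D. \<forall>m\<in>M. 0 \<le> p \<delta> m \<and> p \<delta> m \<le> 1)
                       \<and> (\<forall>\<delta> m. \<delta> \<notin> D \<or> m \<notin> M \<longrightarrow> p \<delta> m = 0)}"

definition att_strats :: "'d set \<Rightarrow> ('d \<Rightarrow> bool) set" where
  "att_strats D = {a. \<forall>\<delta>. \<delta> \<notin> D \<longrightarrow> \<not> a \<delta>}"

definition best_resp :: "('d,'m) ra_params \<Rightarrow> nat set \<Rightarrow> (nat \<Rightarrow> 'd set) \<Rightarrow> (nat \<Rightarrow> real) \<Rightarrow> 'm set
    \<Rightarrow> ('d \<Rightarrow> 'm \<Rightarrow> real) \<Rightarrow> ('d \<Rightarrow> bool) set" where
  "best_resp g I E CAE M p =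
     {a \<in> att_strats (devices I E). \<forall>a'\<in>att_strats (devices I E). UA g I E CAE M p a' \<le> UA g I E CAE M p a}"

text \<open>Optimal defender strategy: p is the first component of a maximiser of U_D over pairs (p,a)
  with a in F_A(p) (ties broken in favour of the defender).\<close>
definition optimal :: "('d,'m) ra_params \<Rightarrow> nat set \<Rightarrow> (nat \<Rightarrow> 'd set) \<Rightarrow> (nat \<Rightarrow> real) \<Rightarrow> 'm set
    \<Rightarrow> ('d \<Rightarrow> 'm \<Rightarrow> real) \<Rightarrow> bool" where
  "optimal g I E CAE M p \<longleftrightarrow>
     p \<in> def_strats (devices I E) M \<and>
     (\<exists>a\<in>best_resp g I E CAE M p.
        \<forall>p'\<in>def_strats (devices I E) M. \<forall>a'\<in>best_resp g I E CAE M p'.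
           UD g I E M p' a' \<le> UD g I E M p a)"

definition combine :: "nat set \<Rightarrow> (nat \<Rightarrow> 'd set) \<Rightarrow> 'm set \<Rightarrow> (nat \<Rightarrow> 'd \<Rightarrow> 'm \<Rightarrow> real)
    \<Rightarrow> 'd \<Rightarrow> 'm \<Rightarrow> real" where
  "combine I E M ps = (\<lambda>\<delta> m. \<Sum>i\<in>I. if \<delta> \<in> E i \<and> m \<in> M then ps i \<delta> m else 0)"

end

theory Submission
  imports Defs
begin

lemma devices_single[simp]: "devices {i} E = E i"
  by (simp add: devices_def)

lemma UA_split:
  assumes I: "finite I" and fin: "finite (devices I E)"
    and disj: "\<forall>i\<in>I. \<forall>j\<in>I. i \<noteq> j \<longrightarrow> E i \<inter> E j = {}"
  shows "UA g I E CAE M p a = (\<Sum>i\<in>I. UA g {i} E CAE M p a)"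
proof -
  have fE: "\<forall>i\<in>I. finite (E i)" using fin by (auto simp: devices_def intro: finite_subset)
  have "(\<Sum>\<delta>\<in>devices I E. (LA g \<delta> * Pdet g M p \<delta> + GA g \<delta> * (1 - Pdet g M p \<delta>)) * ind (a \<delta>))
      = (\<Sum>i\<in>I. \<Sum>\<delta>\<in>E i. (LA g \<delta> * Pdet g M p \<delta> + GA g \<delta> * (1 - Pdet g M p \<delta>)) * ind (a \<delta>))"
    unfolding devices_def by (rule sum.UNION_disjoint[OF I fE disj])
  then show ?thesis
    by (simp add: UA_def CAT_def sum_subtractf)
qed

lemma UD_split:
  assumes I: "finite I" and fin: "finite (devices I E)"
    and disj: "\<forall>i\<in>I. \<forall>j\<in>I. i \<noteq> j \<longrightarrow> E i \<inter> E j = {}"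
  shows "UD g I E M p a = (\<Sum>i\<in>I. UD g {i} E M p a)"
proof -
  have fE: "\<forall>i\<in>I. finite (E i)" using fin by (auto simp: devices_def intro: finite_subset)
  have 1: "(\<Sum>\<delta>\<in>devices I E. (GD g \<delta> * Pdet g M p \<delta> + LD g \<delta> * (1 - Pdet g M p \<delta>)) * ind (a \<delta>))
      = (\<Sum>i\<in>I. \<Sum>\<delta>\<in>E i. (GD g \<delta> * Pdet g M p \<delta> + LD g \<delta> * (1 - Pdet g M p \<delta>)) * ind (a \<delta>))"
    unfolding devices_def by (rule sum.UNION_disjoint[OF I fE disj])
  have 2: "CDT g (devices I E) M p = (\<Sum>i\<in>I. CDT g (E i) M p)"
    unfolding devices_def CDT_def by (rule sum.UNION_disjoint[OF I fE disj])
  show ?thesis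
    by (simp add: UD_def 1 2 sum_subtractf)
qed

lemma UA_loc:
  assumes "\<forall>\<delta>\<in>E i. \<forall>m\<in>M. p \<delta> m = p' \<delta> m" and "\<forall>\<delta>\<in>E i. a \<delta> = a' \<delta>"
  shows "UA g {i} E CAE M p a = UA g {i} E CAE M p' a'"
proof -
  have P: "\<forall>\<delta>\<in>E i. Pdet g M p \<delta> = Pdet g M p' \<delta>"
    using assms(1) unfolding Pdet_def by auto
  have "(\<exists>\<delta>\<in>E i. a \<delta>) = (\<exists>\<delta>\<in>E i. a' \<delta>)" using assms(2) by auto
  then show ?thesis using P assms(2) unfolding UA_def CAT_def
    by (simp cong: sum.cong)
qed

lemma UD_loc:
  assumes "\<forall>\<delta>\<in>E i. \<forall>m\<in>M. p \<delta> m = p' \<delta> m" and "\<forall>\<delta>\<in>E i. a \<delta> = a' \<delta>"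
  shows "UD g {i} E M p a = UD g {i} E M p' a'"
proof -
  have P: "\<forall>\<delta>\<in>E i. Pdet g M p \<delta> = Pdet g M p' \<delta>"
    using assms(1) unfolding Pdet_def by auto
  show ?thesis using P assms unfolding UD_def CDT_def
    by (simp cong: sum.cong)
qed


theorem proposition3:
  fixes g :: "('d,'m) ra_params" and E :: "nat \<Rightarrow> 'd set" and CAE :: "nat \<Rightarrow> real"
    and n :: nat and m :: 'm and M :: "'m set" and ps :: "nat \<Rightarrow> 'd \<Rightarrow> 'm \<Rightarrow> real"
  assumes fin: "finite (devices {1..n} E)"
    and disj: "\<forall>i\<in>{1..n}. \<forall>j\<in>{1..n}. i \<noteq> j \<longrightarrow> E i \<inter> E j = {}"
    and single: "M = {m}"
    and mu_prob: "0 \<le> mu g m \<and> mu g m \<le> 1"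
    and losses: "\<forall>\<delta>\<in>devices {1..n} E. LD g \<delta> < 0 \<and> LA g \<delta> < 0"
    and zero_sum: "\<forall>\<delta>\<in>devices {1..n} E. GD g \<delta> = - LA g \<delta> \<and> LD g \<delta> = - GA g \<delta>"
    and opt: "\<forall>i\<in>{1..n}. optimal g {i} E CAE M (ps i)"
  shows "optimal g {1..n} E CAE M (combine {1..n} E M ps)"
proof -
  define I where "I = {1..n}"
  define p where "p = combine I E M ps"
  have I: "finite I" by (simp add: I_def)
  have finI: "finite (devices I E)" using fin by (simp add: I_def)
  have disjI: "\<forall>i\<in>I. \<forall>j\<in>I. i \<noteq> j \<longrightarrow> E i \<inter> E j = {}" using disj by (simp add: I_def)
  have idx: "j = i" if "i \<in> I" "j \<in> I" "\<delta> \<in> E i" "\<delta> \<in> E j" for i j \<delta>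
    using disjI that by blast
  have optI: "\<forall>i\<in>I. optimal g {i} E CAE M (ps i)" using opt by (simp add: I_def)
  have comb_eq: "p \<delta> m' = ps i \<delta> m'" if "i \<in> I" "\<delta> \<in> E i" "m' \<in> M" for i \<delta> m'
  proof -
    have "p \<delta> m' = (\<Sum>j\<in>I. if j = i then ps i \<delta> m' else 0)"
      unfolding p_def combine_def
      by (rule sum.cong) (use idx that in auto)
    then show ?thesis using that I by simp
  qed
  obtain A where A: "\<forall>i\<in>I. A i \<in> best_resp g {i} E CAE M (ps i) \<and>
      (\<forall>p'\<in>def_strats (E i) M. \<forall>a'\<in>best_resp g {i} E CAE M p'.
           UD g {i} E M p' a' \<le> UD g {i} E M (ps i) (A i))"
    using optI unfolding optimal_def devices_single by metis
  have psdef: "\<forall>i\<in>I. ps i \<in> def_strats (E i) M"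
    using optI unfolding optimal_def by simp
  define a where "a = (\<lambda>\<delta>. \<exists>i\<in>I. \<delta> \<in> E i \<and> A i \<delta>)"
  have Aatt: "A i \<in> att_strats (E i)" if "i \<in> I" for i
    using A that unfolding best_resp_def by simp
  have a_agree: "\<forall>\<delta>\<in>E i. a \<delta> = A i \<delta>" if "i \<in> I" for i
    using idx that unfolding a_def by blast
  have p_agree: "\<forall>\<delta>\<in>E i. \<forall>m'\<in>M. p \<delta> m' = ps i \<delta> m'" if "i \<in> I" for i
    using comb_eq that by blast
  have p_def_strat: "p \<in> def_strats (devices I E) M"
  proof -
    have "0 \<le> p \<delta> m' \<and> p \<delta> m' \<le> 1" if dm: "\<delta> \<in> devices I E" "m' \<in> M" for \<delta> m'
    proof -
      obtain i where i: "i \<in> I" "\<delta> \<in> E i" using dm(1) unfolding devices_def by blast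
      then show ?thesis using comb_eq[OF i dm(2)] psdef dm(2) unfolding def_strats_def by auto
    qed
    moreover have "p \<delta> m' = 0" if "\<delta> \<notin> devices I E \<or> m' \<notin> M" for \<delta> m'
      using that unfolding p_def combine_def devices_def by (auto intro: sum.neutral)
    ultimately show ?thesis unfolding def_strats_def by blast
  qed
  have a_att: "a \<in> att_strats (devices I E)"
    unfolding a_def att_strats_def devices_def by auto
  have restr_att: "(\<lambda>\<delta>. \<delta> \<in> E i \<and> b \<delta>) \<in> att_strats (E i)" for i and b :: "'d \<Rightarrow> bool"
    unfolding att_strats_def by auto
  have a_BR: "a \<in> best_resp g I E CAE M p"
  proof -
    have "UA g I E CAE M p a' \<le> UA g I E CAE M p a" if a': "a' \<in> att_strats (devices I E)" for a'
    proof -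
      have "UA g I E CAE M p a' = (\<Sum>i\<in>I. UA g {i} E CAE M p a')" by (rule UA_split[OF I finI disjI])
      also have "\<dots> \<le> (\<Sum>i\<in>I. UA g {i} E CAE M p a)"
      proof (rule sum_mono)
        fix i assume i: "i \<in> I"
        have "UA g {i} E CAE M p a' = UA g {i} E CAE M (ps i) (\<lambda>\<delta>. \<delta> \<in> E i \<and> a' \<delta>)"
          by (rule UA_loc) (use p_agree[OF i] in auto)
        also have "\<dots> \<le> UA g {i} E CAE M (ps i) (A i)"
          using A i restr_att unfolding best_resp_def devices_single by blast
        also have "\<dots> = UA g {i} E CAE M p a"
          by (rule UA_loc) (use p_agree[OF i] a_agree[OF i] in auto)
        finally show "UA g {i} E CAE M p a' \<le> UA g {i} E CAE M p a" .
      qed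
      also have "\<dots> = UA g I E CAE M p a" by (rule UA_split[OF I finI disjI, symmetric])
      finally show ?thesis .
    qed
    then show ?thesis using a_att unfolding best_resp_def by blast
  qed
  have restr_BR: "(\<lambda>\<delta>. \<delta> \<in> E i \<and> a' \<delta>) \<in> best_resp g {i} E CAE M q"
    if i: "i \<in> I" and a': "a' \<in> best_resp g I E CAE M p'"
      and q: "\<forall>\<delta>\<in>E i. \<forall>m'\<in>M. q \<delta> m' = p' \<delta> m'" for i a' p' q
  proof -
    have "UA g {i} E CAE M q b \<le> UA g {i} E CAE M q (\<lambda>\<delta>. \<delta> \<in> E i \<and> a' \<delta>)"
      if b: "b \<in> att_strats (E i)" for b
    proof (rule ccontr)
      assume "\<not> ?thesis"
      hence lt: "UA g {i} E CAE M p' a' < UA g {i} E CAE M p' b"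
        using UA_loc[of E i M q p' b b g CAE] UA_loc[of E i M q p' "\<lambda>\<delta>. \<delta> \<in> E i \<and> a' \<delta>" a' g CAE] q
        by auto
      define a'' where "a'' = (\<lambda>\<delta>. if \<delta> \<in> E i then b \<delta> else a' \<delta>)"
      have a'att: "a' \<in> att_strats (devices I E)" using a' unfolding best_resp_def by simp
      have a''att: "a'' \<in> att_strats (devices I E)"
        using a'att b i unfolding a''_def att_strats_def devices_def by auto
      have "UA g I E CAE M p' a' = (\<Sum>j\<in>I. UA g {j} E CAE M p' a')" by (rule UA_split[OF I finI disjI])
      also have "\<dots> < (\<Sum>j\<in>I. UA g {j} E CAE M p' a'')"
      proof (rule sum_strict_mono_ex1[OF I])
        show "\<forall>j\<in>I. UA g {j} E CAE M p' a' \<le> UA g {j} E CAE M p' a''"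
        proof
          fix j assume j: "j \<in> I"
          show "UA g {j} E CAE M p' a' \<le> UA g {j} E CAE M p' a''"
          proof (cases "j = i")
            case True
            have "UA g {i} E CAE M p' a'' = UA g {i} E CAE M p' b"
              by (rule UA_loc) (auto simp: a''_def)
            then show ?thesis using lt True by simp
          next
            case False
            have "UA g {j} E CAE M p' a'' = UA g {j} E CAE M p' a'"
              by (rule UA_loc) (use idx[OF i j] False in \<open>auto simp: a''_def\<close>)
            then show ?thesis by simp
          qed
        qed
        have "UA g {i} E CAE M p' a'' = UA g {i} E CAE M p' b"
          by (rule UA_loc) (auto simp: a''_def)
        then show "\<exists>j\<in>I. UA g {j} E CAE M p' a' < UA g {j} E CAE M p' a''" using lt i by (intro bexI[of _ i]) auto
      qed
      also have "\<dots> = UA g I E CAE M p' a''" by (rule UA_split[OF I finI disjI, symmetric])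
      finally have "UA g I E CAE M p' a' < UA g I E CAE M p' a''" .
      moreover have "UA g I E CAE M p' a'' \<le> UA g I E CAE M p' a'"
        using a' a''att unfolding best_resp_def by blast
      ultimately show False by simp
    qed
    then show ?thesis using restr_att unfolding best_resp_def devices_single by blast
  qed
  have "UD g I E M p' a' \<le> UD g I E M p a"
    if p': "p' \<in> def_strats (devices I E) M" and a': "a' \<in> best_resp g I E CAE M p'" for p' a'
  proof -
    have "UD g I E M p' a' = (\<Sum>i\<in>I. UD g {i} E M p' a')" by (rule UD_split[OF I finI disjI])
    also have "\<dots> \<le> (\<Sum>i\<in>I. UD g {i} E M p a)"
    proof (rule sum_mono)
      fix i assume i: "i \<in> I"
      define q where "q = (\<lambda>\<delta> m'. if \<delta> \<in> E i \<and> m' \<in> M then p' \<delta> m' else 0)"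
      have qagree: "\<forall>\<delta>\<in>E i. \<forall>m'\<in>M. q \<delta> m' = p' \<delta> m'" by (simp add: q_def)
      have qdef: "q \<in> def_strats (E i) M"
        using p' i unfolding def_strats_def q_def devices_def by auto
      have qBR: "(\<lambda>\<delta>. \<delta> \<in> E i \<and> a' \<delta>) \<in> best_resp g {i} E CAE M q"
        by (rule restr_BR[OF i a' qagree])
      have "UD g {i} E M p' a' = UD g {i} E M q (\<lambda>\<delta>. \<delta> \<in> E i \<and> a' \<delta>)"
        by (rule UD_loc) (use qagree in auto)
      also have "\<dots> \<le> UD g {i} E M (ps i) (A i)"
        using A i qdef qBR by blast
      also have "\<dots> = UD g {i} E M p a"
        by (rule UD_loc) (use p_agree[OF i] a_agree[OF i] in auto)
      finally show "UD g {i} E M p' a' \<le> UD g {i} E M p a" .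
    qed
    also have "\<dots> = UD g I E M p a" by (rule UD_split[OF I finI disjI, symmetric])
    finally show ?thesis .
  qed
  then have "optimal g I E CAE M p"
    unfolding optimal_def using p_def_strat a_BR by blast
  then show ?thesis by (simp add: I_def p_def)
qed

end
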